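(* Let $(X,d_X,\mu_X)$ and $(Y,d_Y,\mu_Y)$ be compact metric measure spaces, with distance kernel embeddings $\Phi_k^X$ and $\Phi_k^Y$. Let $k$ be a positive integer and let $\varepsilon=d_H^{L^2}(\Phi_k^X(X),\Phi_k^Y(Y))$. Then \[ d_{GH}(X,Y)\le 2\varepsilon\min\Big\{\max_{x\in X}\|\Phi_k^X(x)\|_2,\ \max_{y\in Y}\|\Phi_k^Y(y)\|_2\Big\}+\|E_{X,k}\|_\infty+\|E_{Y,k}\|_\infty+\varepsilon^2. \]
   Context: For a compact metric measure space $(X,d_X,\mu_X)$ (Radon Borel measure), the distance kernel operator $D^X$ on $L^2(X,\mu_X)$ is $(D^Xf)(x)=\int_X f(y)d_X(x,y)\,d\mu_X(y)$. It is compact self-adjoint; let $\phi_i$ be an orthonormal basis of real eigenfunctions with eigenvalues $\lambda_i$ ordered by decreasing absolute value (all non-zero eigenvalues assumed of multiplicity one, signs fixed by a convention). Set $\alpha_i=\sqrt{\lambda_i}\phi_i$ (square root with positive imaginary part if $\lambda_i<0$; eigenfunctions with zero eigenvalue replaced by $0$), and $\Phi_k^X(x)=(\alpha_1(x),\dots,\alpha_k(x))\in\mathbb{C}^k$. $\|\cdot\|_2$ is the Euclidean norm on $\mathbb{C}^k$ and $d_H^{L^2}$ the associated Hausdorff distance. For $v,w\in\mathbb{C}^k$ let $[v,w]=\sum_{i=1}^k v_iw_i$ (bilinear, not Hermitian). The error function is $E_{X,k}(x,x')=|[\Phi_k^X(x),\Phi_k^X(x')]-d_X(x,x')|$ on $X\times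 X$, and similarly $E_{Y,k}$. $d_{GH}$ is the Gromov–Hausdorff distance. *)

theory Defs
  imports "HOL-Analysis.Analysis"
begin

(* On a compact metric space every finite Borel measure is Radon. *)
definition cmm_space :: "'a::metric_space set \<Rightarrow> 'a measure \<Rightarrow> bool" where
  "cmm_space X M \<longleftrightarrow> compact X \<and> X \<noteq> {} \<and>
     sets M = sets (restrict_space borel X) \<and> finite_measure M"

definition L2_fun :: "'a measure \<Rightarrow> ('a \<Rightarrow> real) \<Rightarrow> bool" where
  "L2_fun M f \<longleftrightarrow> f \<in> borel_measurable M \<and> integrable M (\<lambda>x. (f x)\<^sup>2)"

definition L2_inner :: "'a measure \<Rightarrow> ('a \<Rightarrow> real) \<Rightarrow> ('a \<Rightarrow> real) \<Rightarrow> real" where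
  "L2_inner M f g = (LINT x|M. f x * g x)"

definition dk_op :: "'a::metric_space measure \<Rightarrow> ('a \<Rightarrow> real) \<Rightarrow> 'a \<Rightarrow> real" where
  "dk_op M f x = (LINT y|M. f y * dist x y)"

(* (lam i, phi i) is the spectral data of D^X as in the paper, indexed from 0:
   - the phi i are L2 functions;
   - |lam i| is non-increasing (ordering by decreasing absolute value; zero eigenvalues last);
   - for lam i \<noteq> 0, phi i is an eigenfunction (continuous representative: equation holds
     at every point of X);
   - the eigenfunctions with non-zero eigenvalue are orthonormal;
   - every non-zero eigenvalue of D^X occurs among the lam i and has multiplicity one:
     any L2 eigenfunction f with eigenvalue c \<noteq> 0 is a.e. a multiple of some phi i with lam i = c.
   Eigenfunctions with zero eigenvalue play no role (they are replaced by 0 in alpha). *)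
definition dk_eigensystem ::
  "'a::metric_space set \<Rightarrow> 'a measure \<Rightarrow> (nat \<Rightarrow> real) \<Rightarrow> (nat \<Rightarrow> 'a \<Rightarrow> real) \<Rightarrow> bool" where
  "dk_eigensystem X M lam phi \<longleftrightarrow>
     (\<forall>i. L2_fun M (phi i)) \<and>
     antimono (\<lambda>i. \<bar>lam i\<bar>) \<and>
     (\<forall>i. lam i \<noteq> 0 \<longrightarrow> (\<forall>x\<in>X. dk_op M (phi i) x = lam i * phi i x)) \<and>
     (\<forall>i j. lam i \<noteq> 0 \<longrightarrow> lam j \<noteq> 0 \<longrightarrow>
        L2_inner M (phi i) (phi j) = (if i = j then 1 else 0)) \<and>
     (\<forall>f c. L2_fun M f \<longrightarrow> c \<noteq> 0 \<longrightarrow> (AE x in M. dk_op M f x = c * f x) \<longrightarrow>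
        \<not> (AE x in M. f x = 0) \<longrightarrow>
        (\<exists>i. lam i = c \<and> (AE x in M. f x = L2_inner M f (phi i) * phi i x)))"

(* alpha_i = sqrt(lam_i) phi_i, principal square root (positive imaginary part for lam_i < 0);
   for lam_i = 0 this is 0 *)
definition dk_alpha :: "(nat \<Rightarrow> real) \<Rightarrow> (nat \<Rightarrow> 'a \<Rightarrow> real) \<Rightarrow> nat \<Rightarrow> 'a \<Rightarrow> complex" where
  "dk_alpha lam phi i x = csqrt (complex_of_real (lam i)) * complex_of_real (phi i x)"

(* Phi_k(x) in C^k, represented as a function on indices 0..k-1 (zero elsewhere) *)
definition dk_Phi :: "(nat \<Rightarrow> real) \<Rightarrow> (nat \<Rightarrow> 'a \<Rightarrow> real) \<Rightarrow> nat \<Rightarrow> 'a \<Rightarrow> (nat \<Rightarrow> complex)" where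
  "dk_Phi lam phi k x = (\<lambda>i. if i < k then dk_alpha lam phi i x else 0)"

definition vnorm2 :: "nat \<Rightarrow> (nat \<Rightarrow> complex) \<Rightarrow> real" where
  "vnorm2 k v = L2_set (\<lambda>i. cmod (v i)) {..<k}"

(* bilinear (non-Hermitian) form [v,w] on C^k *)
definition bilin :: "nat \<Rightarrow> (nat \<Rightarrow> complex) \<Rightarrow> (nat \<Rightarrow> complex) \<Rightarrow> complex" where
  "bilin k v w = (\<Sum>i<k. v i * w i)"

definition hausdist_L2 :: "nat \<Rightarrow> (nat \<Rightarrow> complex) set \<Rightarrow> (nat \<Rightarrow> complex) set \<Rightarrow> real" where
  "hausdist_L2 k A B =
     max (SUP a\<in>A. INF b\<in>B. vnorm2 k (\<lambda>i. a i - b i))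
         (SUP b\<in>B. INF a\<in>A. vnorm2 k (\<lambda>i. a i - b i))"

definition dk_err :: "(nat \<Rightarrow> real) \<Rightarrow> (nat \<Rightarrow> 'a::metric_space \<Rightarrow> real) \<Rightarrow> nat \<Rightarrow> 'a \<Rightarrow> 'a \<Rightarrow> real" where
  "dk_err lam phi k x x' =
     cmod (bilin k (dk_Phi lam phi k x) (dk_Phi lam phi k x') - complex_of_real (dist x x'))"

definition dk_err_sup :: "'a::metric_space set \<Rightarrow> (nat \<Rightarrow> real) \<Rightarrow> (nat \<Rightarrow> 'a \<Rightarrow> real) \<Rightarrow> nat \<Rightarrow> real" where
  "dk_err_sup X lam phi k = (SUP p\<in>X \<times> X. dk_err lam phi k (fst p) (snd p))"

definition correspondence :: "'a set \<Rightarrow> 'b set \<Rightarrow> ('a \<times> 'b) set \<Rightarrow> bool" where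
  "correspondence X Y R \<longleftrightarrow> R \<subseteq> X \<times> Y \<and> (\<forall>x\<in>X. \<exists>y. (x, y) \<in> R) \<and> (\<forall>y\<in>Y. \<exists>x. (x, y) \<in> R)"

definition distortion :: "('a::metric_space \<times> 'b::metric_space) set \<Rightarrow> real" where
  "distortion R = (SUP p\<in>R \<times> R. \<bar>dist (fst (fst p)) (fst (snd p)) - dist (snd (fst p)) (snd (snd p))\<bar>)"

definition GH_dist :: "'a::metric_space set \<Rightarrow> 'b::metric_space set \<Rightarrow> real" where
  "GH_dist X Y = (1/2) * (INF R\<in>{R. correspondence X Y R}. distortion R)"

end

theory Submission
  imports Defs
begin

lemma cmm_space_eq: assumes "cmm_space X M" shows "space M = X"
proof -
  have "sets M = sets (restrict_space borel X)" using assms by (simp add: cmm_space_def)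
  then have "space M = space (restrict_space borel X)" by (rule sets_eq_imp_space_eq)
  then show ?thesis by (simp add: space_restrict_space)
qed
lemma cmm_meas_dist: assumes "cmm_space X M" shows "(\<lambda>y. dist x y) \<in> borel_measurable M"
proof -
  have s: "sets M = sets (restrict_space borel X)" using assms by (simp add: cmm_space_def)
  have "(\<lambda>y. dist x y) \<in> borel_measurable borel" by (intro borel_measurable_continuous_onI continuous_intros)
  then have "(\<lambda>y. dist x y) \<in> borel_measurable (restrict_space borel X)"
    by (rule measurable_restrict_space1)
  then show ?thesis by (subst measurable_cong_sets[OF s refl])
qed
lemma L2_integrable: assumes "cmm_space X M" "L2_fun M f" shows "integrable M f"
proof -
  interpret finite_measure M using assms by (simp add: cmm_space_def)
  have m: "f \<in> borel_measurable M" "integrable M (\<lambda>x. (f x)\<^sup>2)" using assms(2) by (auto simp: L2_fun_def)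
  have i: "integrable M (\<lambda>x. (f x)\<^sup>2 + 1)" using m(2) by (rule Bochner_Integration.integrable_add) simp
  have b: "\<bar>f x\<bar> \<le> (f x)\<^sup>2 + 1" for x
  proof -
    have "0 \<le> (\<bar>f x\<bar> - 1)\<^sup>2" by simp
    then have "2 * \<bar>f x\<bar> \<le> (f x)\<^sup>2 + 1" by (simp add: power2_eq_square algebra_simps)
    then show ?thesis by simp
  qed
  show ?thesis by (rule Bochner_Integration.integrable_bound[OF i m(1)]) (intro AE_I2, simp add: b)
qed

lemma dk_op_lipschitz:
  assumes cm: "cmm_space X M" and f: "L2_fun M f"
  shows "(LINT y|M. \<bar>f y\<bar>)-lipschitz_on X (dk_op M f)"
proof (rule lipschitz_onI)
  have sp: "space M = X" using cm by (rule cmm_space_eq)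
  have bX: "bounded X" using cm by (simp add: cmm_space_def compact_imp_bounded)
  have fi: "integrable M f" using L2_integrable[OF cm f] .
  have fm: "f \<in> borel_measurable M" using f by (simp add: L2_fun_def)
  have int: "integrable M (\<lambda>y. f y * dist x y)" if "x \<in> X" for x
  proof (rule Bochner_Integration.integrable_bound[where f="\<lambda>y. \<bar>f y\<bar> * diameter X"])
    show "integrable M (\<lambda>y. \<bar>f y\<bar> * diameter X)" using fi by (intro integrable_mult_left integrable_abs)
    show "(\<lambda>y. f y * dist x y) \<in> borel_measurable M" by (intro borel_measurable_times fm cmm_meas_dist[OF cm])
    show "AE y in M. norm (f y * dist x y) \<le> norm (\<bar>f y\<bar> * diameter X)"
    proof (rule AE_I2)
      fix y assume "y \<in> space M"
      then have d: "dist x y \<le> diameter X" using sp that bX diameter_bounded_bound by auto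
      have "0 \<le> dist x y" by simp
      then have "\<bar>f y\<bar> * dist x y \<le> \<bar>f y\<bar> * diameter X" using d by (intro mult_left_mono) auto
      then show "norm (f y * dist x y) \<le> norm (\<bar>f y\<bar> * diameter X)"
        using d order.trans[OF zero_le_dist d] by (simp add: abs_mult)
    qed
  qed
  fix x x' assume x: "x \<in> X" and x': "x' \<in> X"
  have "dk_op M f x - dk_op M f x' = (LINT y|M. f y * dist x y - f y * dist x' y)"
    unfolding dk_op_def using int[OF x] int[OF x'] by simp
  also have "\<bar>\<dots>\<bar> \<le> (LINT y|M. \<bar>f y * dist x y - f y * dist x' y\<bar>)"
    by (rule integral_abs_bound)
  also have "\<dots> \<le> (LINT y|M. \<bar>f y\<bar> * dist x x')"
  proof (rule integral_mono)
    show "integrable M (\<lambda>y. \<bar>f y * dist x y - f y * dist x' y\<bar>)" using int[OF x] int[OF x'] by simp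
    show "integrable M (\<lambda>y. \<bar>f y\<bar> * dist x x')" using fi by (intro integrable_mult_left integrable_abs)
    fix y
    have "\<bar>dist x y - dist x' y\<bar> \<le> dist x x'" using abs_dist_diff_le[of x y x'] by (simp add: dist_commute)
    then have "\<bar>f y\<bar> * \<bar>dist x y - dist x' y\<bar> \<le> \<bar>f y\<bar> * dist x x'" by (intro mult_left_mono) auto
    then show "\<bar>f y * dist x y - f y * dist x' y\<bar> \<le> \<bar>f y\<bar> * dist x x'"
      by (simp add: right_diff_distrib[symmetric] abs_mult)
  qed
  also have "\<dots> = (LINT y|M. \<bar>f y\<bar>) * dist x x'" by simp
  finally show "dist (dk_op M f x) (dk_op M f x') \<le> (LINT y|M. \<bar>f y\<bar>) * dist x x'"
    by (simp add: dist_real_def)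
next
  show "0 \<le> (LINT y|M. \<bar>f y\<bar>)" by (intro integral_nonneg_AE) auto
qed

lemma phi_cont:
  assumes cm: "cmm_space X M" and es: "dk_eigensystem X M lam phi" and l: "lam i \<noteq> 0"
  shows "continuous_on X (phi i)"
proof -
  have f: "L2_fun M (phi i)" using es unfolding dk_eigensystem_def by blast
  have c: "continuous_on X (\<lambda>x. dk_op M (phi i) x / lam i)"
    by (rule continuous_on_divide[OF lipschitz_on_continuous_on[OF dk_op_lipschitz[OF cm f]] continuous_on_const]) (use l in simp)
  have eq: "\<forall>x\<in>X. dk_op M (phi i) x = lam i * phi i x" using es l unfolding dk_eigensystem_def by blast
  have eq': "dk_op M (phi i) x / lam i = phi i x" if "x \<in> X" for x
    using eq that l by simp
  have "continuous_on X (\<lambda>x. dk_op M (phi i) x / lam i) = continuous_on X (\<lambda>x. phi i x)"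
    by (rule continuous_on_cong[OF refl eq'])
  with c show ?thesis by simp
qed

lemma alpha_cont:
  assumes cm: "cmm_space X M" and es: "dk_eigensystem X M lam phi"
  shows "continuous_on X (\<lambda>x. dk_Phi lam phi k x i)"
proof (cases "i < k \<and> lam i \<noteq> 0")
  case True
  have "continuous_on X (\<lambda>x. csqrt (complex_of_real (lam i)) * complex_of_real (phi i x))"
    using True by (intro continuous_on_mult_left continuous_on_of_real phi_cont[OF cm es]) simp
  then show ?thesis using True unfolding dk_Phi_def dk_alpha_def by simp
next
  case False
  then have e: "(\<lambda>x. dk_Phi lam phi k x i) = (\<lambda>x. 0)" by (auto simp: dk_Phi_def dk_alpha_def)
  show ?thesis unfolding e by (rule continuous_on_const)
qed

lemma vnorm2_cont:
  assumes "\<And>i. continuous_on S (\<lambda>s. F s i)"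
  shows "continuous_on S (\<lambda>s. vnorm2 k (F s))"
  unfolding vnorm2_def L2_set_def by (intro continuous_intros assms)

lemma vnorm2_nonneg: "0 \<le> vnorm2 k v"
  unfolding vnorm2_def by (rule L2_set_nonneg)

lemma bilin_CS: "cmod (bilin k u v) \<le> vnorm2 k u * vnorm2 k v"
proof -
  have "cmod (bilin k u v) \<le> (\<Sum>i<k. cmod (u i * v i))" unfolding bilin_def by (rule norm_sum)
  also have "\<dots> = (\<Sum>i<k. \<bar>cmod (u i)\<bar> * \<bar>cmod (v i)\<bar>)" by (simp add: norm_mult)
  also have "\<dots> \<le> vnorm2 k u * vnorm2 k v" unfolding vnorm2_def by (rule L2_set_mult_ineq)
  finally show ?thesis .
qed

lemma bilin_id1:
  "bilin k a a' - bilin k b b' = bilin k (\<lambda>i. a i - b i) a' + bilin k a (\<lambda>i. a' i - b' i)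
     - bilin k (\<lambda>i. a i - b i) (\<lambda>i. a' i - b' i)"
  unfolding bilin_def by (simp add: sum_subtractf[symmetric] sum.distrib[symmetric] algebra_simps)

lemma bilin_id2:
  "bilin k a a' - bilin k b b' = bilin k (\<lambda>i. a i - b i) b' + bilin k b (\<lambda>i. a' i - b' i)
     + bilin k (\<lambda>i. a i - b i) (\<lambda>i. a' i - b' i)"
  unfolding bilin_def by (simp add: sum_subtractf[symmetric] sum.distrib[symmetric] algebra_simps)

lemma tri3: "cmod (u + v - w) \<le> cmod u + cmod v + cmod w"
  using norm_triangle_ineq4[of "u+v" w] norm_triangle_ineq[of u v] by linarith

lemma tri3': "cmod (u + v + w) \<le> cmod u + cmod v + cmod w"
  using norm_triangle_ineq[of "u+v" w] norm_triangle_ineq[of u v] by linarith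

lemma bilin_key:
  assumes d: "vnorm2 k (\<lambda>i. a i - b i) \<le> e" and d': "vnorm2 k (\<lambda>i. a' i - b' i) \<le> e"
    and m: "(vnorm2 k a \<le> m \<and> vnorm2 k a' \<le> m) \<or> (vnorm2 k b \<le> m \<and> vnorm2 k b' \<le> m)"
  shows "cmod (bilin k a a' - bilin k b b') \<le> 2 * e * m + e\<^sup>2"
proof -
  let ?d = "\<lambda>i. a i - b i" and ?d' = "\<lambda>i. a' i - b' i"
  have e0: "0 \<le> e" using d vnorm2_nonneg order.trans by blast
  have dd: "cmod (bilin k ?d ?d') \<le> e * e"
    using bilin_CS[of k ?d ?d'] mult_mono[OF d d' e0 vnorm2_nonneg] by linarith
  show ?thesis using m
  proof
    assume mm: "vnorm2 k a \<le> m \<and> vnorm2 k a' \<le> m"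
    have m0: "0 \<le> m" using mm vnorm2_nonneg order.trans by blast
    have t1: "cmod (bilin k ?d a') \<le> e * m"
      using bilin_CS[of k ?d a'] mult_mono[OF d conjunct2[OF mm] e0 vnorm2_nonneg] by linarith
    have t2: "cmod (bilin k a ?d') \<le> m * e"
      using bilin_CS[of k a ?d'] mult_mono[OF conjunct1[OF mm] d' m0 vnorm2_nonneg] by linarith
    have "cmod (bilin k a a' - bilin k b b') \<le> cmod (bilin k ?d a') + cmod (bilin k a ?d') + cmod (bilin k ?d ?d')"
      unfolding bilin_id1[of k a a' b b'] by (rule tri3)
    moreover have "e * m + m * e + e * e = 2 * e * m + e\<^sup>2" by (simp add: power2_eq_square)
    ultimately show ?thesis using t1 t2 dd by linarith
  next
    assume mm: "vnorm2 k b \<le> m \<and> vnorm2 k b' \<le> m"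
    have m0: "0 \<le> m" using mm vnorm2_nonneg order.trans by blast
    have t1: "cmod (bilin k ?d b') \<le> e * m"
      using bilin_CS[of k ?d b'] mult_mono[OF d conjunct2[OF mm] e0 vnorm2_nonneg] by linarith
    have t2: "cmod (bilin k b ?d') \<le> m * e"
      using bilin_CS[of k b ?d'] mult_mono[OF conjunct1[OF mm] d' m0 vnorm2_nonneg] by linarith
    have "cmod (bilin k a a' - bilin k b b') \<le> cmod (bilin k ?d b') + cmod (bilin k b ?d') + cmod (bilin k ?d ?d')"
      unfolding bilin_id2[of k a a' b b'] by (rule tri3')
    moreover have "e * m + m * e + e * e = 2 * e * m + e\<^sup>2" by (simp add: power2_eq_square)
    ultimately show ?thesis using t1 t2 dd by linarith
  qed
qed

lemma cont_bdd:
  fixes f :: "'s::metric_space \<Rightarrow> real"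
  assumes "compact S" "continuous_on S f"
  shows "bdd_above (f ` S)"
proof (cases "S = {}")
  case True then show ?thesis by simp
next
  case False
  obtain x where "x \<in> S" "\<And>y. y \<in> S \<Longrightarrow> f y \<le> f x"
    using continuous_attains_sup[OF assms(1) False assms(2)] by blast
  then show ?thesis by (intro bdd_aboveI2) auto
qed

lemma sup_inf_attain:
  fixes g :: "'s::metric_space \<Rightarrow> 't::metric_space \<Rightarrow> real"
  assumes S: "compact S" and T: "compact T" "T \<noteq> {}"
    and cs: "\<And>t. continuous_on S (\<lambda>s. g s t)"
    and ct: "\<And>s. continuous_on T (\<lambda>t. g s t)"
    and nn: "\<And>s t. 0 \<le> g s t"
    and s: "s \<in> S"
  shows "\<exists>t\<in>T. g s t \<le> (SUP s\<in>S. INF t\<in>T. g s t)"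
proof -
  obtain t0 where t0: "t0 \<in> T" "\<And>t. t \<in> T \<Longrightarrow> g s t0 \<le> g s t"
    using continuous_attains_inf[OF T(1) T(2) ct[of s]] by blast
  have 1: "g s t0 \<le> (INF t\<in>T. g s t)" using t0 T(2) by (intro cINF_greatest) auto
  obtain t1 where t1: "t1 \<in> T" using T(2) by blast
  obtain K where K: "\<And>s. s \<in> S \<Longrightarrow> g s t1 \<le> K"
    using cont_bdd[OF S cs[of t1]] by (auto simp: bdd_above_def)
  have bb: "bdd_below ((\<lambda>t. g s' t) ` T)" for s' using nn by (intro bdd_belowI2) 
  have "(INF t\<in>T. g s' t) \<le> K" if "s' \<in> S" for s'
    using cINF_lower[OF bb[of s'] t1] K[OF that] by linarith
  then have "bdd_above ((\<lambda>s. INF t\<in>T. g s t) ` S)" by (intro bdd_aboveI2)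
  then have 2: "(INF t\<in>T. g s t) \<le> (SUP s\<in>S. INF t\<in>T. g s t)" by (rule cSUP_upper[OF s])
  show ?thesis using 1 2 t0(1) by (meson order.trans)
qed

lemma err_cont:
  assumes cm: "cmm_space X M" and es: "dk_eigensystem X M lam phi"
  shows "continuous_on (X \<times> X) (\<lambda>p. dk_err lam phi k (fst p) (snd p))"
proof -
  have c1: "continuous_on (X \<times> X) (\<lambda>p. dk_Phi lam phi k (fst p) i)" for i
    by (rule continuous_on_compose2[OF alpha_cont[OF cm es] continuous_on_fst[OF continuous_on_id]]) auto
  have c2: "continuous_on (X \<times> X) (\<lambda>p. dk_Phi lam phi k (snd p) i)" for i
    by (rule continuous_on_compose2[OF alpha_cont[OF cm es] continuous_on_snd[OF continuous_on_id]]) auto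
  have c3: "continuous_on (X \<times> X) (\<lambda>p. dist (fst p) (snd p))"
    by (intro continuous_on_dist continuous_on_fst continuous_on_snd continuous_on_id)
  show ?thesis unfolding dk_err_def bilin_def
    by (intro continuous_on_norm continuous_on_diff continuous_on_sum continuous_on_mult c1 c2
        continuous_on_of_real c3)
qed

lemma distortion_nonneg:
  fixes X :: "'a::metric_space set" and Y :: "'b::metric_space set"
  assumes c: "correspondence X Y R" and X: "compact X" "X \<noteq> {}" and Y: "compact Y"
  shows "0 \<le> distortion R"
proof -
  obtain x where x: "x \<in> X" using X by blast
  obtain y where xy: "(x, y) \<in> R" using c x unfolding correspondence_def by blast
  have sub: "R \<subseteq> X \<times> Y" using c unfolding correspondence_def by blast
  have bX: "bounded X" "bounded Y" using X Y by (auto intro: compact_imp_bounded)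
  have "\<bar>dist (fst (fst p)) (fst (snd p)) - dist (snd (fst p)) (snd (snd p))\<bar> \<le> diameter X + diameter Y"
    if "p \<in> R \<times> R" for p
  proof -
    have m: "fst (fst p) \<in> X" "fst (snd p) \<in> X" "snd (fst p) \<in> Y" "snd (snd p) \<in> Y"
      using that sub by (auto simp: mem_Times_iff)
    have "dist (fst (fst p)) (fst (snd p)) \<le> diameter X" using m bX diameter_bounded_bound by blast
    moreover have "dist (snd (fst p)) (snd (snd p)) \<le> diameter Y" using m bX diameter_bounded_bound by blast
    ultimately show ?thesis using zero_le_dist[of "fst (fst p)" "fst (snd p)"] zero_le_dist[of "snd (fst p)" "snd (snd p)"]
      by linarith
  qed
  then have bdd: "bdd_above ((\<lambda>p. \<bar>dist (fst (fst p)) (fst (snd p)) - dist (snd (fst p)) (snd (snd p))\<bar>) ` (R \<times> R))"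
    by (intro bdd_aboveI2)
  have "\<bar>dist x x - dist y y\<bar> \<le> distortion R"
    unfolding distortion_def using cSUP_upper[OF _ bdd, of "((x,y),(x,y))"] xy by simp
  then show ?thesis by simp
qed
theorem theorem6p8:
  fixes X :: "'a::metric_space set" and M :: "'a measure"
    and lamX :: "nat \<Rightarrow> real" and phiX :: "nat \<Rightarrow> 'a \<Rightarrow> real"
    and Y :: "'b::metric_space set" and N :: "'b measure"
    and lamY :: "nat \<Rightarrow> real" and phiY :: "nat \<Rightarrow> 'b \<Rightarrow> real"
    and k :: nat and \<epsilon> :: real
  assumes "cmm_space X M" and "cmm_space Y N"
    and "dk_eigensystem X M lamX phiX" and "dk_eigensystem Y N lamY phiY"
    and "k > 0"
    and "\<epsilon> = hausdist_L2 k (dk_Phi lamX phiX k ` X) (dk_Phi lamY phiY k ` Y)"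
  shows "GH_dist X Y \<le>
    2 * \<epsilon> * min (SUP x\<in>X. vnorm2 k (dk_Phi lamX phiX k x)) (SUP y\<in>Y. vnorm2 k (dk_Phi lamY phiY k y))
    + dk_err_sup X lamX phiX k + dk_err_sup Y lamY phiY k + \<epsilon>\<^sup>2"
proof -
  let ?A = "dk_Phi lamX phiX k" and ?B = "dk_Phi lamY phiY k"
  let ?g = "\<lambda>x y. vnorm2 k (\<lambda>i. ?A x i - ?B y i)"
  let ?MX = "SUP x\<in>X. vnorm2 k (?A x)" and ?MY = "SUP y\<in>Y. vnorm2 k (?B y)"
  let ?EX = "dk_err_sup X lamX phiX k" and ?EY = "dk_err_sup Y lamY phiY k"
  have cX: "compact X" "X \<noteq> {}" using assms(1) by (auto simp: cmm_space_def)
  have cY: "compact Y" "Y \<noteq> {}" using assms(2) by (auto simp: cmm_space_def)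
  have aX: "\<And>i. continuous_on X (\<lambda>x. ?A x i)" by (rule alpha_cont[OF assms(1) assms(3)])
  have aY: "\<And>i. continuous_on Y (\<lambda>y. ?B y i)" by (rule alpha_cont[OF assms(2) assms(4)])
  have gx: "\<And>y. continuous_on X (\<lambda>x. ?g x y)"
    by (intro vnorm2_cont continuous_on_diff aX continuous_on_const)
  have gy: "\<And>x. continuous_on Y (\<lambda>y. ?g x y)"
    by (intro vnorm2_cont continuous_on_diff aY continuous_on_const)
  have eps: "\<epsilon> = max (SUP x\<in>X. INF y\<in>Y. ?g x y) (SUP y\<in>Y. INF x\<in>X. ?g x y)"
    using assms(6) by (simp add: hausdist_L2_def image_image)
  have F3: "\<exists>y\<in>Y. ?g x y \<le> \<epsilon>" if x: "x \<in> X" for x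
  proof -
    obtain y where y: "y \<in> Y" and yl: "?g x y \<le> (SUP x\<in>X. INF y\<in>Y. ?g x y)"
      using sup_inf_attain[of X Y ?g, OF cX(1) cY gx gy vnorm2_nonneg x] by blast
    have h: "(SUP x\<in>X. INF y\<in>Y. ?g x y) \<le> \<epsilon>" unfolding eps by (rule max.cobounded1)
    show ?thesis using y order.trans[OF yl h] by blast
  qed
  have F4: "\<exists>x\<in>X. ?g x y \<le> \<epsilon>" if y: "y \<in> Y" for y
  proof -
    obtain x where x: "x \<in> X" and xl: "?g x y \<le> (SUP y\<in>Y. INF x\<in>X. ?g x y)"
      using sup_inf_attain[of Y X "\<lambda>y x. ?g x y", OF cY(1) cX gy gx vnorm2_nonneg y] by blast
    have h: "(SUP y\<in>Y. INF x\<in>X. ?g x y) \<le> \<epsilon>" unfolding eps by (rule max.cobounded2)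
    show ?thesis using x order.trans[OF xl h] by blast
  qed
  have MX: "vnorm2 k (?A x) \<le> ?MX" if "x \<in> X" for x
    by (rule cSUP_upper[OF that cont_bdd[OF cX(1) vnorm2_cont[OF aX]]])
  have MY: "vnorm2 k (?B y) \<le> ?MY" if "y \<in> Y" for y
    by (rule cSUP_upper[OF that cont_bdd[OF cY(1) vnorm2_cont[OF aY]]])
  have EX: "dk_err lamX phiX k x x' \<le> ?EX" if "x \<in> X" "x' \<in> X" for x x'
    unfolding dk_err_sup_def
    using cSUP_upper[OF _ cont_bdd[OF compact_Times[OF cX(1) cX(1)] err_cont[OF assms(1) assms(3)]], of "(x, x')"] that
    by simp
  have EY: "dk_err lamY phiY k y y' \<le> ?EY" if "y \<in> Y" "y' \<in> Y" for y y'
    unfolding dk_err_sup_def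
    using cSUP_upper[OF _ cont_bdd[OF compact_Times[OF cY(1) cY(1)] err_cont[OF assms(2) assms(4)]], of "(y, y')"] that
    by simp
  define R where "R = {(x, y). x \<in> X \<and> y \<in> Y \<and> ?g x y \<le> \<epsilon>}"
  have corr: "correspondence X Y R" using F3 F4 unfolding correspondence_def R_def by auto
  define D where "D = 2 * \<epsilon> * min ?MX ?MY + ?EX + ?EY + \<epsilon>\<^sup>2"
  have pt: "\<bar>dist x x' - dist y y'\<bar> \<le> D" if "(x, y) \<in> R" "(x', y') \<in> R" for x y x' y'
  proof -
    from that have x: "x \<in> X" "y \<in> Y" "?g x y \<le> \<epsilon>" and x': "x' \<in> X" "y' \<in> Y" "?g x' y' \<le> \<epsilon>"
      by (auto simp: R_def)
    have b: "cmod (bilin k (?A x) (?A x') - bilin k (?B y) (?B y')) \<le> 2 * \<epsilon> * min ?MX ?MY + \<epsilon>\<^sup>2"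
    proof (cases "?MX \<le> ?MY")
      case True
      then have "min ?MX ?MY = ?MX" by simp
      moreover have "cmod (bilin k (?A x) (?A x') - bilin k (?B y) (?B y')) \<le> 2 * \<epsilon> * ?MX + \<epsilon>\<^sup>2"
        by (rule bilin_key[OF x(3) x'(3)]) (use MX x x' in blast)
      ultimately show ?thesis by simp
    next
      case False
      then have "min ?MX ?MY = ?MY" by simp
      moreover have "cmod (bilin k (?A x) (?A x') - bilin k (?B y) (?B y')) \<le> 2 * \<epsilon> * ?MY + \<epsilon>\<^sup>2"
        by (rule bilin_key[OF x(3) x'(3)]) (use MY x x' in blast)
      ultimately show ?thesis by simp
    qed
    let ?bx = "bilin k (?A x) (?A x')" and ?by = "bilin k (?B y) (?B y')"
    have "\<bar>dist x x' - dist y y'\<bar> = cmod (complex_of_real (dist x x') - complex_of_real (dist y y'))"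
      by (metis norm_of_real of_real_diff)
    also have "complex_of_real (dist x x') - complex_of_real (dist y y') =
        (complex_of_real (dist x x') - ?bx) + (?bx - ?by) + (?by - complex_of_real (dist y y'))"
      by simp
    also have "cmod \<dots> \<le> cmod (complex_of_real (dist x x') - ?bx) + cmod (?bx - ?by) + cmod (?by - complex_of_real (dist y y'))"
      by (rule tri3')
    also have "cmod (complex_of_real (dist x x') - ?bx) = dk_err lamX phiX k x x'"
      unfolding dk_err_def by (rule norm_minus_commute)
    also have "cmod (?by - complex_of_real (dist y y')) = dk_err lamY phiY k y y'"
      unfolding dk_err_def by simp
    finally show ?thesis using b EX[OF x(1) x'(1)] EY[OF x(2) x'(2)] unfolding D_def by linarith
  qed
  obtain x0 where x0: "x0 \<in> X" using cX by blast
  obtain y0 where y0: "(x0, y0) \<in> R" using corr x0 unfolding correspondence_def by blast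
  have RR: "R \<times> R \<noteq> {}" using y0 by blast
  have dR: "distortion R \<le> D" unfolding distortion_def
  proof (rule cSUP_least[OF RR])
    fix p assume p: "p \<in> R \<times> R"
    obtain x y x' y' where pe: "p = ((x, y), (x', y'))" by (metis prod.collapse)
    show "\<bar>dist (fst (fst p)) (fst (snd p)) - dist (snd (fst p)) (snd (snd p))\<bar> \<le> D"
      using p pt unfolding pe by auto
  qed
  have d0: "0 \<le> distortion R" by (rule distortion_nonneg[OF corr cX cY(1)])
  have bb: "bdd_below (distortion ` {R. correspondence X Y R})"
    using distortion_nonneg[OF _ cX cY(1)] by (intro bdd_belowI2) auto
  have "(INF R\<in>{R. correspondence X Y R}. distortion R) \<le> distortion R"
    by (rule cINF_lower[OF bb]) (use corr in simp)
  then have "GH_dist X Y \<le> 1/2 * D" unfolding GH_dist_def using dR by linarith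
  also have "\<dots> \<le> D" using d0 dR by linarith
  finally show ?thesis unfolding D_def .
qed

end
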